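(* Under the distributed-delay standing assumptions, let $\{x_i\}_{i=1}^N$ be a solution of the distributed-delay Hegselmann–Krause system. Then for every $v\in\mathbb{R}^d$, every $T\ge 0$, every $i=1,\dots,N$ and every $t\ge T-\bar\tau$, $$\min_{j=1,\dots,N}\min_{s\in[T-\bar\tau,T]}\langle x_j(s),v\rangle\le\langle x_i(t),v\rangle\le\max_{j=1,\dots,N}\max_{s\in[T-\bar\tau,T]}\langle x_j(s),v\rangle.$$
   Context: Distributed-delay standing assumptions: $N\ge2$, $d\ge1$, $\bar\tau>0$; $\tau_1,\tau_2:[0,\infty)\to[0,\infty)$ continuous with $0\le\tau_1(t)<\tau_2(t)\le\bar\tau$ for all $t\ge0$; $\alpha:[0,\bar\tau]\to(0,\infty)$ continuous; $h(t):=\int_{\tau_1(t)}^{\tau_2(t)}\alpha(s)\,ds>0$; $\psi:\mathbb{R}^d\times\mathbb{R}^d\to\mathbb{R}$ continuous, bounded and strictly positive, $K:=\|\psi\|_\infty$; initial data $x_i^0:[-\bar\tau,0]\to\mathbb{R}^d$ continuous. The distributed-delay system is $$\frac{d}{dt}x_i(t)=\frac{1}{h(t)}\frac{1}{N-1}\sum_{j\ne i}\int_{t-\tau_2(t)}^{t-\tau_1(t)}\alpha(t-s)\,\psi(x_i(t),x_j(s))\,(x_j(s)-x_i(t))\,ds,\quad t>0,$$ with $x_i=x_i^0$ on $[-\bar\tau,0]$; a solution means continuous $x_i:[-\bar\tau,\infty)\to\mathbb{R}^d$, differentiable on $(0,\infty)$, satisfying the system there. $\langle\cdot,\cdot\rangle$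 is the Euclidean inner product. *)

theory Defs
  imports "HOL-Analysis.Analysis"
begin

definition hk_h :: "(real \<Rightarrow> real) \<Rightarrow> (real \<Rightarrow> real) \<Rightarrow> (real \<Rightarrow> real) \<Rightarrow> real \<Rightarrow> real" where
  "hk_h \<alpha> \<tau>1 \<tau>2 t = integral {\<tau>1 t..\<tau>2 t} \<alpha>"

definition hk_rhs ::
  "nat \<Rightarrow> (real \<Rightarrow> real) \<Rightarrow> (real \<Rightarrow> real) \<Rightarrow> (real \<Rightarrow> real) \<Rightarrow> ('d::euclidean_space \<Rightarrow> 'd \<Rightarrow> real)
    \<Rightarrow> (nat \<Rightarrow> real \<Rightarrow> 'd) \<Rightarrow> nat \<Rightarrow> real \<Rightarrow> 'd" where
  "hk_rhs N \<alpha> \<tau>1 \<tau>2 \<psi> x i t =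
     (1 / hk_h \<alpha> \<tau>1 \<tau>2 t) *\<^sub>R ((1 / (real N - 1)) *\<^sub>R
       (\<Sum>j\<in>{0..<N} - {i}.
          integral {t - \<tau>2 t .. t - \<tau>1 t}
            (\<lambda>s. (\<alpha> (t - s) * \<psi> (x i t) (x j s)) *\<^sub>R (x j s - x i t))))"

definition hk_solution ::
  "nat \<Rightarrow> real \<Rightarrow> (real \<Rightarrow> real) \<Rightarrow> (real \<Rightarrow> real) \<Rightarrow> (real \<Rightarrow> real) \<Rightarrow> ('d::euclidean_space \<Rightarrow> 'd \<Rightarrow> real)
    \<Rightarrow> (nat \<Rightarrow> real \<Rightarrow> 'd) \<Rightarrow> (nat \<Rightarrow> real \<Rightarrow> 'd) \<Rightarrow> bool" where
  "hk_solution N \<tau>bar \<alpha> \<tau>1 \<tau>2 \<psi> x0 x \<longleftrightarrow>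
     (\<forall>i<N. continuous_on {-\<tau>bar..} (x i)
        \<and> (\<forall>t\<in>{-\<tau>bar..0}. x i t = x0 i t)
        \<and> (\<forall>t>0. (x i has_vector_derivative hk_rhs N \<alpha> \<tau>1 \<tau>2 \<psi> x i t) (at t)))"

end

theory Submission
  imports Defs
begin

lemma int_inner_nonpos:
  fixes f :: "real \<Rightarrow> 'd::euclidean_space"
  assumes "\<And>s. s \<in> S \<Longrightarrow> f s \<bullet> v \<le> 0"
  shows "integral S f \<bullet> v \<le> 0"
proof (cases "f integrable_on S")
  case True
  have 1: "((\<lambda>s. f s \<bullet> v) has_integral (integral S f \<bullet> v)) S"
    using has_integral_linear[OF integrable_integral[OF True] bounded_linear_inner_left[of v]]
    by (simp add: o_def)
  have 2: "((\<lambda>s. 0::real) has_integral 0) S" by (rule has_integral_0)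
  show ?thesis using has_integral_le[OF 1 2] assms by blast
next
  case False then show ?thesis by (simp add: not_integrable_integral)
qed

lemma real_int_nonneg:
  fixes g :: "real \<Rightarrow> real"
  assumes "\<And>s. s \<in> S \<Longrightarrow> 0 \<le> g s"
  shows "0 \<le> integral S g"
proof (cases "g integrable_on S")
  case True then show ?thesis using integral_nonneg assms by blast
next
  case False then show ?thesis by (simp add: not_integrable_integral)
qed

lemma rhs_nonpos:
  fixes \<psi> :: "'d::euclidean_space \<Rightarrow> 'd \<Rightarrow> real" and x :: "nat \<Rightarrow> real \<Rightarrow> 'd"
  assumes N2: "N \<ge> 2"
    and tb: "0 \<le> \<tau>1 t \<and> \<tau>1 t < \<tau>2 t \<and> \<tau>2 t \<le> \<tau>bar"
    and alpha_pos: "\<And>s. s \<in> {0..\<tau>bar} \<Longrightarrow> \<alpha> s > 0"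
    and psi_pos: "\<And>a b. \<psi> a b > 0"
    and cond0: "\<forall>j s. j < N \<longrightarrow> j \<noteq> i \<longrightarrow> s \<in> {t - \<tau>2 t..t - \<tau>1 t} \<longrightarrow> x j s \<bullet> v \<le> x i t \<bullet> v"
  shows "hk_rhs N \<alpha> \<tau>1 \<tau>2 \<psi> x i t \<bullet> v \<le> 0"
proof -
  have cond: "\<And>j s. j < N \<Longrightarrow> j \<noteq> i \<Longrightarrow> s \<in> {t - \<tau>2 t..t - \<tau>1 t} \<Longrightarrow> x j s \<bullet> v \<le> x i t \<bullet> v"
    using cond0 by blast
  have h: "0 \<le> hk_h \<alpha> \<tau>1 \<tau>2 t" unfolding hk_h_def
  proof (rule real_int_nonneg)
    fix s assume "s \<in> {\<tau>1 t..\<tau>2 t}"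
    then have "s \<in> {0..\<tau>bar}" using tb by auto
    then show "0 \<le> \<alpha> s" using alpha_pos[of s] by simp
  qed
  have c: "0 \<le> 1 / (real N - 1)" using N2 by simp
  have terms: "integral {t - \<tau>2 t .. t - \<tau>1 t}
            (\<lambda>s. (\<alpha> (t - s) * \<psi> (x i t) (x j s)) *\<^sub>R (x j s - x i t)) \<bullet> v \<le> 0"
    if j: "j \<in> {0..<N} - {i}" for j
  proof (rule int_inner_nonpos)
    fix s assume s: "s \<in> {t - \<tau>2 t .. t - \<tau>1 t}"
    then have "t - s \<in> {0..\<tau>bar}" using tb by auto
    then have a: "0 \<le> \<alpha> (t - s) * \<psi> (x i t) (x j s)"
      using alpha_pos psi_pos by (simp add: less_imp_le)
    have d: "x j s \<bullet> v - x i t \<bullet> v \<le> 0" using cond[of j s] j s by auto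
    show "((\<alpha> (t - s) * \<psi> (x i t) (x j s)) *\<^sub>R (x j s - x i t)) \<bullet> v \<le> 0"
      unfolding inner_scaleR_left inner_diff_left
      using mult_nonneg_nonpos[OF a d] .
  qed
  have s: "(\<Sum>j\<in>{0..<N} - {i}. integral {t - \<tau>2 t .. t - \<tau>1 t}
            (\<lambda>s. (\<alpha> (t - s) * \<psi> (x i t) (x j s)) *\<^sub>R (x j s - x i t)) \<bullet> v) \<le> 0"
    by (rule sum_nonpos) (use terms in auto)
  show ?thesis unfolding hk_rhs_def inner_scaleR_left inner_sum_left
    by (rule mult_nonneg_nonpos[OF _ mult_nonneg_nonpos[OF c s]]) (use h in simp)
qed

lemma core:
  fixes \<psi> :: "'d::euclidean_space \<Rightarrow> 'd \<Rightarrow> real" and x x0 :: "nat \<Rightarrow> real \<Rightarrow> 'd"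
  assumes N2: "N \<ge> 2"
    and tau_bounds: "\<And>t. t \<ge> 0 \<Longrightarrow> 0 \<le> \<tau>1 t \<and> \<tau>1 t < \<tau>2 t \<and> \<tau>2 t \<le> \<tau>bar"
    and alpha_pos: "\<And>s. s \<in> {0..\<tau>bar} \<Longrightarrow> \<alpha> s > 0"
    and psi_pos: "\<And>a b. \<psi> a b > 0"
    and sol: "hk_solution N \<tau>bar \<alpha> \<tau>1 \<tau>2 \<psi> x0 x"
    and T: "T \<ge> 0"
    and bnd: "\<And>j s. j < N \<Longrightarrow> s \<in> {T - \<tau>bar..T} \<Longrightarrow> x j s \<bullet> v \<le> M"
    and i: "i < N" and t: "t \<ge> T - \<tau>bar"
  shows "x i t \<bullet> v \<le> M"
proof (cases "t \<le> T")
  case True then show ?thesis using bnd i t by auto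
next
  case False
  hence tT: "t > T" by simp
  have contx: "\<And>j. j < N \<Longrightarrow> continuous_on {-\<tau>bar..} (x j)"
    and derx: "\<And>j s. j < N \<Longrightarrow> s > 0 \<Longrightarrow> (x j has_vector_derivative hk_rhs N \<alpha> \<tau>1 \<tau>2 \<psi> x j s) (at s)"
    using sol unfolding hk_solution_def by auto
  have taubar: "\<tau>bar \<ge> 0" using tau_bounds[of 0] by auto
  have claim: "x i t \<bullet> v < M + \<epsilon> * (1 + (t - T))" if eps: "\<epsilon> > 0" for \<epsilon>
  proof (rule ccontr)
    assume nc: "\<not> ?thesis"
    define b where "b = (\<lambda>s. M + \<epsilon> * (1 + (s - T)))"
    define B where "B = {s \<in> {T..}. \<exists>j<N. b s \<le> x j s \<bullet> v}"
    have tB: "t \<in> B" using nc tT i unfolding B_def b_def by auto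
    have Beq: "B = (\<Union>j\<in>{..<N}. {s \<in> {T..}. b s \<le> x j s \<bullet> v})"
      unfolding B_def by auto
    have "closed {s \<in> {T..}. b s \<le> x j s \<bullet> v}" if "j \<in> {..<N}" for j
    proof (rule continuous_on_closed_Collect_le)
      show "continuous_on {T..} b" unfolding b_def by (intro continuous_intros)
      have "continuous_on {T..} (x j)"
        using contx[of j] that continuous_on_subset[of "{-\<tau>bar..}" "x j" "{T..}"] T taubar by auto
      then show "continuous_on {T..} (\<lambda>s. x j s \<bullet> v)" by (intro continuous_intros)
    qed auto
    hence clB: "closed B" unfolding Beq by (intro closed_UN) auto
    have bddB: "bdd_below B" unfolding B_def by (rule bdd_belowI[of _ T]) auto
    define ts where "ts = Inf B"
    have tsB: "ts \<in> B" unfolding ts_def using closed_contains_Inf[OF _ bddB clB] tB by auto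
    have tsT: "ts \<ge> T" using tsB unfolding B_def by auto
    have "ts \<noteq> T"
    proof
      assume "ts = T"
      then obtain j where j: "j < N" "b T \<le> x j T \<bullet> v" using tsB unfolding B_def by auto
      have "x j T \<bullet> v \<le> M" using bnd[of j T] j taubar by auto
      then show False using j eps unfolding b_def by auto
    qed
    hence tsT': "ts > T" using tsT by simp
    define m where "m = Max ((\<lambda>j. x j ts \<bullet> v) ` {..<N})"
    have fin: "finite ((\<lambda>j. x j ts \<bullet> v) ` {..<N})" "(\<lambda>j. x j ts \<bullet> v) ` {..<N} \<noteq> {}"
      using N2 by (auto simp: lessThan_empty_iff)
    obtain i0 where i0: "i0 < N" "x i0 ts \<bullet> v = m"
      using Max_in[OF fin] unfolding m_def by auto
    have mge: "\<And>j. j < N \<Longrightarrow> x j ts \<bullet> v \<le> m" unfolding m_def using fin by auto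
    have bts: "b ts \<le> x i0 ts \<bullet> v" using tsB mge i0 unfolding B_def by force
    have bmono: "\<And>s. s \<le> ts \<Longrightarrow> b s \<le> b ts" unfolding b_def using eps
      by (simp add: mult_left_mono)
    have bM: "M < b ts" unfolding b_def using eps tsT by (simp add: add_pos_nonneg)
    have cond: "x j s \<bullet> v \<le> x i0 ts \<bullet> v"
      if j: "j < N" "j \<noteq> i0" and s: "s \<in> {ts - \<tau>2 ts..ts - \<tau>1 ts}" for j s
    proof -
      have sr: "T - \<tau>bar \<le> s" "s \<le> ts" using s tau_bounds[of ts] tsT T by auto
      consider "s \<le> T" | "T < s \<and> s < ts" | "s = ts" using sr by linarith
      then show ?thesis
      proof cases
        case 1 then have "x j s \<bullet> v \<le> M" using bnd[of j s] j sr by auto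
        then show ?thesis using bM bts by linarith
      next
        case 2
        have "s \<notin> B"
        proof
          assume "s \<in> B"
          then have "ts \<le> s" unfolding ts_def using cInf_lower[OF _ bddB] by auto
          then show False using 2 by simp
        qed
        then have "x j s \<bullet> v < b s" using 2 j unfolding B_def by auto
        then show ?thesis using bmono[of s] 2 bts by linarith
      next
        case 3 then show ?thesis using mge[OF j(1)] i0 by simp
      qed
    qed
    have tb: "0 \<le> \<tau>1 ts \<and> \<tau>1 ts < \<tau>2 ts \<and> \<tau>2 ts \<le> \<tau>bar"
      using tau_bounds[of ts] tsT T by auto
    have rn: "hk_rhs N \<alpha> \<tau>1 \<tau>2 \<psi> x i0 ts \<bullet> v \<le> 0"
    proof (rule rhs_nonpos)
      show "2 \<le> N" by (rule N2)
      show "0 \<le> \<tau>1 ts \<and> \<tau>1 ts < \<tau>2 ts \<and> \<tau>2 ts \<le> \<tau>bar" by (rule tb)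
      show "\<And>s. s \<in> {0..\<tau>bar} \<Longrightarrow> \<alpha> s > 0" by (rule alpha_pos)
      show "\<And>a b. \<psi> a b > 0" by (rule psi_pos)
      show "\<forall>j s. j < N \<longrightarrow> j \<noteq> i0 \<longrightarrow> s \<in> {ts - \<tau>2 ts..ts - \<tau>1 ts} \<longrightarrow> x j s \<bullet> v \<le> x i0 ts \<bullet> v"
        using cond by blast
    qed
    define \<phi> where "\<phi> = (\<lambda>s. x i0 s \<bullet> v - b s)"
    have "((\<lambda>s. x i0 s \<bullet> v) has_vector_derivative hk_rhs N \<alpha> \<tau>1 \<tau>2 \<psi> x i0 ts \<bullet> v) (at ts)"
      using bounded_linear.has_vector_derivative[OF bounded_linear_inner_left derx[OF i0(1)]] tsT' T
      by auto
    hence d1: "((\<lambda>s. x i0 s \<bullet> v) has_real_derivative hk_rhs N \<alpha> \<tau>1 \<tau>2 \<psi> x i0 ts \<bullet> v) (at ts)"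
      by (simp add: has_real_derivative_iff_has_vector_derivative)
    have d2: "(b has_real_derivative \<epsilon>) (at ts)" unfolding b_def
      by (auto intro!: derivative_eq_intros)
    have dphi: "(\<phi> has_real_derivative (hk_rhs N \<alpha> \<tau>1 \<tau>2 \<psi> x i0 ts \<bullet> v - \<epsilon>)) (at ts)"
      unfolding \<phi>_def using DERIV_diff[OF d1 d2] .
    obtain d where d: "d > 0" "\<And>h. h > 0 \<Longrightarrow> h < d \<Longrightarrow> \<phi> ts < \<phi> (ts - h)"
      using DERIV_neg_dec_left[OF dphi] rn eps by force
    define h where "h = min d (ts - T) / 2"
    have h: "h > 0" "h < d" "h \<le> ts - T" unfolding h_def using d tsT' by auto
    have "0 < \<phi> (ts - h)" using d(2)[OF h(1,2)] bts unfolding \<phi>_def by simp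
    hence "ts - h \<in> B" unfolding B_def \<phi>_def using h i0 by auto
    hence "ts \<le> ts - h" unfolding ts_def using cInf_lower[OF _ bddB] by auto
    then show False using h by simp
  qed
  show ?thesis
  proof (rule ccontr)
    assume "\<not> ?thesis"
    hence g: "x i t \<bullet> v > M" by simp
    define \<epsilon> where "\<epsilon> = (x i t \<bullet> v - M) / (1 + (t - T))"
    have pos: "1 + (t - T) > 0" using tT by simp
    have "\<epsilon> > 0" unfolding \<epsilon>_def using g pos by simp
    from claim[OF this] have "x i t \<bullet> v < M + (x i t \<bullet> v - M)"
      unfolding \<epsilon>_def using pos by simp
    then show False by simp
  qed
qed

theorem lemma5p1:
  fixes N :: nat and \<tau>bar :: real
    and \<tau>1 \<tau>2 \<alpha> :: "real \<Rightarrow> real"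
    and \<psi> :: "'d::euclidean_space \<Rightarrow> 'd \<Rightarrow> real"
    and x0 x :: "nat \<Rightarrow> real \<Rightarrow> 'd"
  assumes N2: "N \<ge> 2"
    and taubar_pos: "\<tau>bar > 0"
    and tau1_cont: "continuous_on {0..} \<tau>1"
    and tau2_cont: "continuous_on {0..} \<tau>2"
    and tau_bounds: "\<And>t. t \<ge> 0 \<Longrightarrow> 0 \<le> \<tau>1 t \<and> \<tau>1 t < \<tau>2 t \<and> \<tau>2 t \<le> \<tau>bar"
    and alpha_cont: "continuous_on {0..\<tau>bar} \<alpha>"
    and alpha_pos: "\<And>s. s \<in> {0..\<tau>bar} \<Longrightarrow> \<alpha> s > 0"
    and psi_cont: "continuous_on UNIV (\<lambda>p. \<psi> (fst p) (snd p))"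
    and psi_bdd: "bounded (range (\<lambda>p. \<psi> (fst p) (snd p)))"
    and psi_pos: "\<And>a b. \<psi> a b > 0"
    and x0_cont: "\<And>i. i < N \<Longrightarrow> continuous_on {-\<tau>bar..0} (x0 i)"
    and sol: "hk_solution N \<tau>bar \<alpha> \<tau>1 \<tau>2 \<psi> x0 x"
  shows "\<forall>v::'d. \<forall>T\<ge>0. \<forall>i<N. \<forall>t\<ge>T - \<tau>bar.
           Inf {x j s \<bullet> v | j s. j < N \<and> s \<in> {T - \<tau>bar..T}} \<le> x i t \<bullet> v
         \<and> x i t \<bullet> v \<le> Sup {x j s \<bullet> v | j s. j < N \<and> s \<in> {T - \<tau>bar..T}}"
proof (intro allI impI)
  fix v :: 'd and T :: real and i t
  assume T: "T \<ge> 0" and i: "i < N" and t: "t \<ge> T - \<tau>bar"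
  define S where "S = {x j s \<bullet> v | j s. j < N \<and> s \<in> {T - \<tau>bar..T}}"
  have contx: "\<And>j. j < N \<Longrightarrow> continuous_on {-\<tau>bar..} (x j)"
    using sol unfolding hk_solution_def by auto
  have Seq: "S = \<Union> ((\<lambda>j. (\<lambda>s. x j s \<bullet> v) ` {T - \<tau>bar..T}) ` {..<N})"
    unfolding S_def by blast
  have "bounded ((\<lambda>s. x j s \<bullet> v) ` {T - \<tau>bar..T})" if "j < N" for j
  proof -
    have "continuous_on {T - \<tau>bar..T} (x j)"
      using contx[OF that] continuous_on_subset[of "{-\<tau>bar..}" "x j" "{T - \<tau>bar..T}"] T by auto
    hence "continuous_on {T - \<tau>bar..T} (\<lambda>s. x j s \<bullet> v)" by (intro continuous_intros)
    thus ?thesis by (intro compact_imp_bounded compact_continuous_image) auto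
  qed
  hence bS: "bounded S" unfolding Seq by (intro bounded_Union) auto
  have mem: "\<And>j s. j < N \<Longrightarrow> s \<in> {T - \<tau>bar..T} \<Longrightarrow> x j s \<bullet> v \<in> S"
    unfolding S_def by blast
  have up: "x i t \<bullet> v \<le> Sup S"
    by (rule core[OF N2 tau_bounds alpha_pos psi_pos sol T _ i t])
       (auto intro!: cSup_upper mem bounded_imp_bdd_above[OF bS])
  have lo: "x i t \<bullet> (- v) \<le> - Inf S"
    by (rule core[OF N2 tau_bounds alpha_pos psi_pos sol T _ i t])
       (auto intro!: cInf_lower mem bounded_imp_bdd_below[OF bS])
  show "Inf S \<le> x i t \<bullet> v \<and> x i t \<bullet> v \<le> Sup S" using up lo by simp
qed

end
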